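(* Let $a\ge 2$ be even, and let $(c,d)\in\mathcal{B}$ with $c\ge 0$ and $c+d\ge 1$. Then $U=\{(a,-a),(c,d)\}\subseteq\mathcal{B}$ is unavoidable.
   Context: The bicyclic inverse semigroup is $\mathcal{B}=\{(a,b)\in\mathbb{Z}\times\mathbb{Z}\mid a\ge 0,\ a+b\ge 0\}$ with multiplication $(a,b)(c,d)=(\max\{c+d,a\}-d,\ b+d)$. A subset $U\subseteq\mathcal{B}$ is called avoidable if $\mathcal{B}$ can be partitioned into two subsets $A$ and $B$ such that no element of $U$ can be written as a product $xy$ of two distinct elements $x\neq y$ both in $A$, or both in $B$. A set is unavoidable if it is not avoidable. *)

theory Defs
  imports Main
begin

definition bicyclic :: "(int \<times> int) set" where
  "bicyclic = {(a, b). a \<ge> 0 \<and> a + b \<ge> 0}"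

definition bmult :: "int \<times> int \<Rightarrow> int \<times> int \<Rightarrow> int \<times> int" where
  "bmult x y = (case x of (a, b) \<Rightarrow> case y of (c, d) \<Rightarrow> (max (c + d) a - d, b + d))"

definition avoidable :: "(int \<times> int) set \<Rightarrow> bool" where
  "avoidable U \<longleftrightarrow> (\<exists>A B. A \<union> B = bicyclic \<and> A \<inter> B = {} \<and>
     (\<forall>u\<in>U. \<forall>x y. x \<noteq> y \<and> ((x \<in> A \<and> y \<in> A) \<or> (x \<in> B \<and> y \<in> B)) \<longrightarrow> bmult x y \<noteq> u))"

definition unavoidable :: "(int \<times> int) set \<Rightarrow> bool" where
  "unavoidable U \<longleftrightarrow> \<not> avoidable U"

end

theory Submission
  imports Defs
begin

theorem lemma3p1:
  fixes a c d :: int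
  assumes "a \<ge> 2" and "even a"
    and "(c, d) \<in> bicyclic" and "c \<ge> 0" and "c + d \<ge> 1"
  shows "unavoidable {(a, -a), (c, d)}"
proof -
  obtain h where h: "a = 2 * h" using assms(2) by (auto elim: evenE)
  have h1: "h \<ge> 1" using h assms(1) by simp
  define x where "x = (h, -h)"
  define y where "y = (h + 1, -h)"
  define z where "z = (c, d + h)"
  have xy: "bmult x y = (a, -a)" using h h1 by (simp add: x_def y_def bmult_def max_def)
  have xz: "bmult x z = (c, d)" using assms h1 by (simp add: x_def z_def bmult_def max_def)
  have yz: "bmult y z = (c, d)" using assms h1 by (simp add: y_def z_def bmult_def max_def)
  have neq: "x \<noteq> y" "x \<noteq> z" "y \<noteq> z" using assms h h1
    by (auto simp: x_def y_def z_def)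
  have inB: "x \<in> bicyclic" "y \<in> bicyclic" "z \<in> bicyclic" using assms h1
    by (auto simp: x_def y_def z_def bicyclic_def)
  show ?thesis unfolding unavoidable_def avoidable_def
  proof
    assume "\<exists>A B. A \<union> B = bicyclic \<and> A \<inter> B = {} \<and>
     (\<forall>u\<in>{(a, -a), (c, d)}. \<forall>x y. x \<noteq> y \<and> ((x \<in> A \<and> y \<in> A) \<or> (x \<in> B \<and> y \<in> B)) \<longrightarrow> bmult x y \<noteq> u)"
    then obtain A B where AB: "A \<union> B = bicyclic" and
      P: "\<forall>u\<in>{(a, -a), (c, d)}. \<forall>x y. x \<noteq> y \<and> ((x \<in> A \<and> y \<in> A) \<or> (x \<in> B \<and> y \<in> B)) \<longrightarrow> bmult x y \<noteq> u"
      by blast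
    have p1: "\<not> ((x \<in> A \<and> y \<in> A) \<or> (x \<in> B \<and> y \<in> B))" using P xy neq by blast
    have p2: "\<not> ((x \<in> A \<and> z \<in> A) \<or> (x \<in> B \<and> z \<in> B))" using P xz neq by blast
    have p3: "\<not> ((y \<in> A \<and> z \<in> A) \<or> (y \<in> B \<and> z \<in> B))" using P yz neq by blast
    show False using p1 p2 p3 inB AB by blast
  qed
qed

end
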